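(* Let $T$ be a complete theory and $\mathcal{M}$ a sufficiently saturated model of $T$. (1) The set $\mathcal{SL}_{\rm acl}(T)$ of all regular operators of the form ${\rm acl}^\Delta$ ($\Delta$ a set of formulae), ordered by pointwise inclusion, is a lower semilattice (any two elements have a greatest lower bound, given by intersection) with a least and a greatest element. (2) For $n\in\omega\setminus\{0\}$, the set $\mathcal{SL}_{{\rm acl}_n}(T)$ of all regular operators of the form ${\rm acl}^\Delta_n$, ordered by pointwise inclusion, is a lower semilattice with a least element; it has a greatest element if the operator ${\rm acl}_n$ is regular.
   Context: For a set $\Delta$ of formulae $\varphi(x,\overline{y})$ and $A\subseteq M$, ${\rm acl}^\Delta(A)$ is the union of the solution sets $\varphi(\mathcal{M},\overline{a})$ over $\varphi\in\Delta$ and tuples $\overline{a}$ from $A$ such that $\varphi(x,\overline{a})$ has finitely many solutions; ${\rm acl}^\Delta_n(A)$ is the analogous union over those with at most $n$ solutions. ${\rm acl}_n$ is ${\rm acl}^\Delta_n$ with $\Delta$ the set of all formulae, and ${\rm acl}$ is ${\rm acl}^\Delta$ with $\Delta$ all formulae. An operator ${\rm cl}$ on subsets of $M$ is regular if $A\subseteq{\rm cl}(A)$ and ${\rm cl}({\rm cl}(A))\subseteq{\rm cl}(A)$ for all $A\subseteq M$. Pointwise inclusion: ${\rm cl}_1\leq{\rm cl}_2$ iff ${\rm cl}_1(A)\subseteq{\rm cl}_2(A)$ for all $A$. *)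

theory Defs
  imports Main
begin

datatype 'f trm = Var nat | Fn 'f "'f trm list"

datatype ('f,'p) fm =
    FEq "'f trm" "'f trm"
  | FRel 'p "'f trm list"
  | FNeg "('f,'p) fm"
  | FConj "('f,'p) fm" "('f,'p) fm"
  | FEx nat "('f,'p) fm"

record ('a,'f,'p) struc =
  univ :: "'a set"
  fun_int :: "'f \<Rightarrow> 'a list \<Rightarrow> 'a"
  rel_int :: "'p \<Rightarrow> 'a list \<Rightarrow> bool"

definition is_struc :: "('a,'f,'p) struc \<Rightarrow> bool" where
  "is_struc M \<longleftrightarrow> univ M \<noteq> {} \<and>
     (\<forall>f as. set as \<subseteq> univ M \<longrightarrow> fun_int M f as \<in> univ M)"

fun tvars :: "'f trm \<Rightarrow> nat set" where
  "tvars (Var n) = {n}"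
| "tvars (Fn f ts) = (\<Union>t\<in>set ts. tvars t)"

fun fvars :: "('f,'p) fm \<Rightarrow> nat set" where
  "fvars (FEq s t) = tvars s \<union> tvars t"
| "fvars (FRel p ts) = (\<Union>t\<in>set ts. tvars t)"
| "fvars (FNeg \<phi>) = fvars \<phi>"
| "fvars (FConj \<phi> \<psi>) = fvars \<phi> \<union> fvars \<psi>"
| "fvars (FEx v \<phi>) = fvars \<phi> - {v}"

fun teval :: "('a,'f,'p) struc \<Rightarrow> (nat \<Rightarrow> 'a) \<Rightarrow> 'f trm \<Rightarrow> 'a" where
  "teval M e (Var n) = e n"
| "teval M e (Fn f ts) = fun_int M f (map (teval M e) ts)"

fun sat :: "('a,'f,'p) struc \<Rightarrow> (nat \<Rightarrow> 'a) \<Rightarrow> ('f,'p) fm \<Rightarrow> bool" where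
  "sat M e (FEq s t) = (teval M e s = teval M e t)"
| "sat M e (FRel p ts) = rel_int M p (map (teval M e) ts)"
| "sat M e (FNeg \<phi>) = (\<not> sat M e \<phi>)"
| "sat M e (FConj \<phi> \<psi>) = (sat M e \<phi> \<and> sat M e \<psi>)"
| "sat M e (FEx v \<phi>) = (\<exists>b\<in>univ M. sat M (e(v := b)) \<phi>)"

definition sentence :: "('f,'p) fm \<Rightarrow> bool" where
  "sentence \<phi> \<longleftrightarrow> fvars \<phi> = {}"

definition true_in :: "('a,'f,'p) struc \<Rightarrow> ('f,'p) fm \<Rightarrow> bool" where
  "true_in M \<phi> \<longleftrightarrow> (\<forall>e. (\<forall>i. e i \<in> univ M) \<longrightarrow> sat M e \<phi>)"

definition is_model :: "('a,'f,'p) struc \<Rightarrow> ('f,'p) fm set \<Rightarrow> bool" where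
  "is_model M T \<longleftrightarrow> is_struc M \<and> (\<forall>\<phi>\<in>T. sentence \<phi> \<and> true_in M \<phi>)"

definition complete_theory :: "('f,'p) fm set \<Rightarrow> 'a itself \<Rightarrow> bool" where
  "complete_theory T _ \<longleftrightarrow> (\<forall>\<phi>\<in>T. sentence \<phi>) \<and>
     (\<exists>N :: ('a,'f,'p) struc. is_model N T) \<and>
     (\<forall>\<phi>. sentence \<phi> \<longrightarrow>
        (\<forall>N :: ('a,'f,'p) struc. is_model N T \<longrightarrow> true_in N \<phi>) \<or>
        (\<forall>N :: ('a,'f,'p) struc. is_model N T \<longrightarrow> true_in N (FNeg \<phi>)))"

section \<open>Formulas \<phi>(x, y1..yn): x is variable 0, y_i is variable i\<close>

definition env :: "'a \<Rightarrow> 'a list \<Rightarrow> nat \<Rightarrow> 'a" where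
  "env b as i = (if i = 0 then b else if i - 1 < length as then as ! (i - 1) else b)"

text \<open>A formula \<phi>(x,\<bar>y) is a pair (n, \<phi>) with free variables among x, y1..yn.\<close>
definition wf_xfm :: "nat \<times> ('f,'p) fm \<Rightarrow> bool" where
  "wf_xfm p \<longleftrightarrow> fvars (snd p) \<subseteq> {0..fst p}"

definition sols :: "('a,'f,'p) struc \<Rightarrow> ('f,'p) fm \<Rightarrow> 'a list \<Rightarrow> 'a set" where
  "sols M \<phi> as = {b \<in> univ M. sat M (env b as) \<phi>}"

text \<open>Saturation: every finitely satisfiable 1-type over a parameter set A with
  |A| < kappa is realized. Here kappa = |T|^+ with |T| = |L| + aleph0, i.e.
  A injects into the type of symbols plus nat.\<close>
definition kappa_small_params :: "'a set \<Rightarrow> 'f itself \<Rightarrow> 'p itself \<Rightarrow> bool" where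
  "kappa_small_params A _ _ \<longleftrightarrow>
     (\<exists>g :: 'a \<Rightarrow> ('f + 'p + nat). inj_on g A)"

definition saturated_model :: "('a,'f,'p) struc \<Rightarrow> ('f,'p) fm set \<Rightarrow> bool" where
  "saturated_model M T \<longleftrightarrow>
    (\<forall>A p. A \<subseteq> univ M \<longrightarrow> kappa_small_params A TYPE('f) TYPE('p) \<longrightarrow>
       (\<forall>(\<phi>, as) \<in> p. set as \<subseteq> A \<and> fvars \<phi> \<subseteq> {0..length as}) \<longrightarrow>
       (\<forall>q. finite q \<longrightarrow> q \<subseteq> p \<longrightarrow>
           (\<exists>b\<in>univ M. \<forall>(\<phi>, as) \<in> q. sat M (env b as) \<phi>)) \<longrightarrow>
       (\<exists>b\<in>univ M. \<forall>(\<phi>, as) \<in> p. sat M (env b as) \<phi>))"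

definition aclD :: "('a,'f,'p) struc \<Rightarrow> (nat \<times> ('f,'p) fm) set \<Rightarrow> 'a set \<Rightarrow> 'a set" where
  "aclD M \<Delta> A = \<Union> {sols M \<phi> as | n \<phi> as. (n, \<phi>) \<in> \<Delta> \<and> set as \<subseteq> A \<and>
                        length as = n \<and> finite (sols M \<phi> as)}"

definition aclDn :: "('a,'f,'p) struc \<Rightarrow> (nat \<times> ('f,'p) fm) set \<Rightarrow> nat \<Rightarrow> 'a set \<Rightarrow> 'a set" where
  "aclDn M \<Delta> k A = \<Union> {sols M \<phi> as | n \<phi> as. (n, \<phi>) \<in> \<Delta> \<and> set as \<subseteq> A \<and>
                        length as = n \<and> finite (sols M \<phi> as) \<and> card (sols M \<phi> as) \<le> k}"

definition all_xfms :: "(nat \<times> ('f,'p) fm) set" where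
  "all_xfms = {p. wf_xfm p}"

definition acl_n :: "('a,'f,'p) struc \<Rightarrow> nat \<Rightarrow> 'a set \<Rightarrow> 'a set" where
  "acl_n M k = aclDn M all_xfms k"

definition regular_op :: "('a,'f,'p) struc \<Rightarrow> ('a set \<Rightarrow> 'a set) \<Rightarrow> bool" where
  "regular_op M cl \<longleftrightarrow> (\<forall>A. A \<subseteq> univ M \<longrightarrow> A \<subseteq> cl A \<and> cl (cl A) \<subseteq> cl A)"

definition op_le :: "('a,'f,'p) struc \<Rightarrow> ('a set \<Rightarrow> 'a set) \<Rightarrow> ('a set \<Rightarrow> 'a set) \<Rightarrow> bool" where
  "op_le M c1 c2 \<longleftrightarrow> (\<forall>A. A \<subseteq> univ M \<longrightarrow> c1 A \<subseteq> c2 A)"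

definition SL_acl :: "('a,'f,'p) struc \<Rightarrow> ('a set \<Rightarrow> 'a set) set" where
  "SL_acl M = {cl. \<exists>\<Delta>. \<Delta> \<subseteq> all_xfms \<and> cl = aclD M \<Delta> \<and> regular_op M cl}"

definition SL_acl_n :: "('a,'f,'p) struc \<Rightarrow> nat \<Rightarrow> ('a set \<Rightarrow> 'a set) set" where
  "SL_acl_n M k = {cl. \<exists>\<Delta>. \<Delta> \<subseteq> all_xfms \<and> cl = aclDn M \<Delta> k \<and> regular_op M cl}"

definition meet_semilattice_by_inter :: "('a,'f,'p) struc \<Rightarrow> ('a set \<Rightarrow> 'a set) set \<Rightarrow> bool" where
  "meet_semilattice_by_inter M S \<longleftrightarrow>
     (\<forall>c1\<in>S. \<forall>c2\<in>S. (\<lambda>A. c1 A \<inter> c2 A) \<in> S \<and>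
        op_le M (\<lambda>A. c1 A \<inter> c2 A) c1 \<and> op_le M (\<lambda>A. c1 A \<inter> c2 A) c2 \<and>
        (\<forall>c\<in>S. op_le M c c1 \<and> op_le M c c2 \<longrightarrow> op_le M c (\<lambda>A. c1 A \<inter> c2 A)))"

definition has_least :: "('a,'f,'p) struc \<Rightarrow> ('a set \<Rightarrow> 'a set) set \<Rightarrow> bool" where
  "has_least M S \<longleftrightarrow> (\<exists>c\<in>S. \<forall>d\<in>S. op_le M c d)"

definition has_greatest :: "('a,'f,'p) struc \<Rightarrow> ('a set \<Rightarrow> 'a set) set \<Rightarrow> bool" where
  "has_greatest M S \<longleftrightarrow> (\<exists>c\<in>S. \<forall>d\<in>S. op_le M d c)"

end

theory Submission
  imports Defs
begin


lemma teval_cong: "(\<forall>i\<in>tvars t. e i = e' i) \<Longrightarrow> teval M e t = teval M e' t"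
proof (induction t)
  case (Fn g ts)
  have "map (teval M e) ts = map (teval M e') ts" using Fn by (auto simp: map_eq_conv)
  then show ?case by (metis teval.simps(2))
qed auto

lemma sat_cong: "(\<forall>i\<in>fvars \<phi>. e i = e' i) \<Longrightarrow> sat M e \<phi> = sat M e' \<phi>"
proof (induction \<phi> arbitrary: e e')
  case (FEq s t) then show ?case using teval_cong[of s e e' M] teval_cong[of t e e' M] by simp
next
  case (FRel p ts)
  have "map (teval M e) ts = map (teval M e') ts"
    using FRel by (auto simp: map_eq_conv intro!: teval_cong)
  then show ?case by (metis sat.simps(2))
next
  case (FConj a b)
  have "sat M e a = sat M e' a" by (rule FConj.IH(1)) (use FConj.prems in auto)
  moreover have "sat M e b = sat M e' b" by (rule FConj.IH(2)) (use FConj.prems in auto)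
  ultimately show ?case by simp
next
  case (FEx v \<phi>)
  have "\<And>b. sat M (e(v:=b)) \<phi> = sat M (e'(v:=b)) \<phi>"
    using FEx by (intro FEx.IH) auto
  then show ?case by simp
qed auto

fun rent :: "(nat \<Rightarrow> nat) \<Rightarrow> 'f trm \<Rightarrow> 'f trm" where
  "rent f (Var n) = Var (f n)"
| "rent f (Fn g ts) = Fn g (map (rent f) ts)"

fun renf :: "(nat \<Rightarrow> nat) \<Rightarrow> ('f,'p) fm \<Rightarrow> ('f,'p) fm" where
  "renf f (FEq s t) = FEq (rent f s) (rent f t)"
| "renf f (FRel p ts) = FRel p (map (rent f) ts)"
| "renf f (FNeg \<phi>) = FNeg (renf f \<phi>)"
| "renf f (FConj \<phi> \<psi>) = FConj (renf f \<phi>) (renf f \<psi>)"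
| "renf f (FEx v \<phi>) = FEx (f v) (renf f \<phi>)"

lemma teval_rent: "teval M e (rent f t) = teval M (e \<circ> f) t"
proof (induction t)
  case (Fn g ts)
  have "map (teval M e \<circ> rent f) ts = map (teval M (e \<circ> f)) ts" using Fn by (auto simp: map_eq_conv comp_def)
  then show ?case by (metis teval.simps(2) rent.simps(2) map_map)
qed auto

lemma tvars_rent: "tvars (rent f t) = f ` tvars t"
  by (induction t) auto

lemma sat_renf: "inj f \<Longrightarrow> sat M e (renf f \<phi>) = sat M (e \<circ> f) \<phi>"
proof (induction \<phi> arbitrary: e)
  case (FRel p ts) then show ?case by (simp add: teval_rent comp_def)
next
  case (FEx v \<phi>)
  have "\<And>b. (\<lambda>a. if f a = f v then b else e (f a)) = (\<lambda>a. e (f a))(v := b)"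
    using FEx.prems by (auto simp: fun_eq_iff inj_def)
  then show ?case using FEx by simp
qed (auto simp: teval_rent)

lemma fvars_renf: "fvars (renf f \<phi>) \<subseteq> f ` fvars \<phi>"
  by (induction \<phi>) (auto simp: tvars_rent)

fun exs :: "nat list \<Rightarrow> ('f,'p) fm \<Rightarrow> ('f,'p) fm" where
  "exs [] \<psi> = \<psi>"
| "exs (v # vs) \<psi> = FEx v (exs vs \<psi>)"

lemma sat_exs: "sat M e (exs vs \<psi>) \<longleftrightarrow>
   (\<exists>g. (\<forall>v\<in>set vs. g v \<in> univ M) \<and> sat M (\<lambda>i. if i \<in> set vs then g i else e i) \<psi>)"
proof (induction vs arbitrary: e)
  case Nil then show ?case by simp
next
  case (Cons v vs)
  show ?case
  proof
    assume "sat M e (exs (v # vs) \<psi>)"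
    then obtain b g where b: "b \<in> univ M" and g: "\<forall>v\<in>set vs. g v \<in> univ M"
      and s: "sat M (\<lambda>i. if i \<in> set vs then g i else (e(v:=b)) i) \<psi>"
      using Cons by auto
    define g' where "g' i = (if i \<in> set vs then g i else b)" for i
    have "(\<lambda>i. if i \<in> set vs then g i else (e(v:=b)) i) = (\<lambda>i. if i \<in> set (v#vs) then g' i else e i)"
      by (auto simp: g'_def fun_eq_iff)
    then show "\<exists>g. (\<forall>v\<in>set (v # vs). g v \<in> univ M) \<and> sat M (\<lambda>i. if i \<in> set (v # vs) then g i else e i) \<psi>"
      using s b g by (intro exI[of _ g']) (auto simp: g'_def)
  next
    assume "\<exists>g. (\<forall>v\<in>set (v # vs). g v \<in> univ M) \<and> sat M (\<lambda>i. if i \<in> set (v # vs) then g i else e i) \<psi>"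
    then obtain g where g: "\<forall>v\<in>set (v # vs). g v \<in> univ M"
      and s: "sat M (\<lambda>i. if i \<in> set (v # vs) then g i else e i) \<psi>" by blast
    have "(\<lambda>i. if i \<in> set vs then g i else (e(v:=g v)) i) = (\<lambda>i. if i \<in> set (v#vs) then g i else e i)"
      by (auto simp: fun_eq_iff)
    then have "\<exists>g'. (\<forall>v\<in>set vs. g' v \<in> univ M) \<and> sat M (\<lambda>i. if i \<in> set vs then g' i else (e(v := g v)) i) \<psi>"
      using s g by (intro exI[of _ g]) auto
    then have "sat M (e(v := g v)) (exs vs \<psi>)" using Cons.IH[of "e(v := g v)"] by blast
    then show "sat M e (exs (v # vs) \<psi>)" using g by auto
  qed
qed



definition sw :: "nat \<Rightarrow> nat \<Rightarrow> nat" where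
  "sw z i = (if i = 0 then z else if i = z then 0 else i)"

lemma inj_sw: "inj (sw z)"
  by (auto simp: inj_def sw_def split: if_splits)

fun bigconj :: "('f,'p) fm list \<Rightarrow> ('f,'p) fm" where
  "bigconj [] = FEq (Var 0) (Var 0)"
| "bigconj (\<phi> # \<phi>s) = FConj \<phi> (bigconj \<phi>s)"

lemma sat_bigconj: "sat M e (bigconj \<phi>s) \<longleftrightarrow> (\<forall>\<phi>\<in>set \<phi>s. sat M e \<phi>)"
  by (induction \<phi>s) auto

lemma fvars_bigconj: "fvars (bigconj \<phi>s) \<subseteq> {0} \<union> \<Union> (fvars ` set \<phi>s)"
  by (induction \<phi>s) auto

lemma fvars_exs: "fvars (exs vs \<psi>) = fvars \<psi> - set vs"
  by (induction vs) auto

definition zvs :: "nat \<Rightarrow> nat \<Rightarrow> nat list" where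
  "zvs N k = map (\<lambda>j. N+1+j) [0..<Suc k]"

definition atmost_body :: "nat \<Rightarrow> nat \<Rightarrow> ('f,'p) fm \<Rightarrow> ('f,'p) fm" where
  "atmost_body k N \<phi> = bigconj (map (\<lambda>j. renf (sw (N+1+j)) \<phi>) [0..<Suc k] @
      map (\<lambda>(i,j). FNeg (FEq (Var (N+1+i)) (Var (N+1+j))))
        (filter (\<lambda>(i,j). i \<noteq> j) (List.product [0..<Suc k] [0..<Suc k])))"

definition atmost :: "nat \<Rightarrow> nat \<Rightarrow> ('f,'p) fm \<Rightarrow> ('f,'p) fm" where
  "atmost k N \<phi> = FNeg (exs (zvs N k) (atmost_body k N \<phi>))"

lemma zset: "set (zvs N k) = {N+1..N+1+k}"
proof -
  have "set (zvs N k) = (\<lambda>j. N+1+j) ` {0..<Suc k}" unfolding zvs_def by (simp only: set_map set_upt)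
  also have "\<dots> = {N+1..N+1+k}"
  proof (rule set_eqI, rule iffI)
    fix x assume "x \<in> {N+1..N+1+k}"
    then show "x \<in> (\<lambda>j. N+1+j) ` {0..<Suc k}"
      by (intro image_eqI[of _ _ "x - (N+1)"]) auto
  qed auto
  finally show ?thesis .
qed

lemma fvars_atmost:
  assumes "fvars \<phi> \<subseteq> {0..N}"
  shows "fvars (atmost k N (\<phi> :: ('f,'p) fm)) \<subseteq> {0..N}"
proof -
  have r: "fvars (renf (sw z) \<phi>) \<subseteq> {0..N} \<union> {z}" for z
    using fvars_renf[of "sw z" \<phi>] assms by (auto simp: sw_def)
  define L1 where "L1 = map (\<lambda>j. renf (sw (N+1+j)) \<phi>) [0..<Suc k]"
  define L2 where "L2 = map (\<lambda>(i,j). FNeg (FEq (Var (N+1+i)) (Var (N+1+j))) :: ('f,'p) fm)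
        (filter (\<lambda>(i,j). i \<noteq> j) (List.product [0..<Suc k] [0..<Suc k]))"
  have 1: "fvars \<psi> \<subseteq> {0..N} \<union> set (zvs N k)" if a1: "\<psi> \<in> set L1" for \<psi>
  proof -
    obtain j where j: "j < Suc k" "\<psi> = renf (sw (N+1+j)) \<phi>" using a1 unfolding L1_def by (auto simp del: upt_Suc)
    then show ?thesis using r[of "N+1+j"] by (auto simp: zset)
  qed
  have 2: "fvars \<psi> \<subseteq> {0..N} \<union> set (zvs N k)" if a2: "\<psi> \<in> set L2" for \<psi>
  proof -
    obtain i j where j: "i < Suc k" "j < Suc k" "\<psi> = FNeg (FEq (Var (N+1+i)) (Var (N+1+j)))"
      using a2 unfolding L2_def by (auto simp del: upt_Suc simp: set_product)
    then show ?thesis by (auto simp: zset)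
  qed
  have "fvars (atmost_body k N \<phi>) \<subseteq> {0..N} \<union> set (zvs N k)"
  proof -
    have "fvars (atmost_body k N \<phi>) \<subseteq> {0} \<union> \<Union> (fvars ` set (L1 @ L2))"
      unfolding atmost_body_def L1_def L2_def by (rule fvars_bigconj)
    also have "\<dots> \<subseteq> {0..N} \<union> set (zvs N k)" using 1 2 by auto
    finally show ?thesis .
  qed
  then show ?thesis unfolding atmost_def by (auto simp: fvars_exs)
qed

lemma inj_card: "(\<exists>h. (\<forall>j\<le>k. h j \<in> S) \<and> inj_on h {..k}) \<longleftrightarrow> \<not> (finite S \<and> card S \<le> k)"
proof
  assume "\<exists>h. (\<forall>j\<le>k. h j \<in> S) \<and> inj_on h {..k}"
  then obtain h where h: "\<forall>j\<le>k. h j \<in> S" "inj_on h {..k}" by blast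
  show "\<not> (finite S \<and> card S \<le> k)"
  proof
    assume "finite S \<and> card S \<le> k"
    moreover have "card {..k} \<le> card S" if "finite S"
      using card_inj_on_le[OF h(2) _ that] h(1) by auto
    ultimately show False by simp
  qed
next
  assume a: "\<not> (finite S \<and> card S \<le> k)"
  obtain B where B: "B \<subseteq> S" "finite B" "card B = Suc k"
  proof (cases "finite S")
    case True
    then have "Suc k \<le> card S" using a by auto
    then show ?thesis using that obtain_subset_with_card_n by metis
  next
    case False
    then show ?thesis using that infinite_arbitrarily_large by metis
  qed
  then obtain h where "bij_betw h {..k} B"
    using bij_betw_iff_card[of "{..k}" B] by auto
  then show "\<exists>h. (\<forall>j\<le>k. h j \<in> S) \<and> inj_on h {..k}"
    using B by (intro exI[of _ h]) (auto simp: bij_betw_def)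
qed

lemma sat_atmost:
  assumes fv: "fvars \<phi> \<subseteq> {0..N}"
  shows "sat M e (atmost k N \<phi>) \<longleftrightarrow>
     finite {c \<in> univ M. sat M (e(0 := c)) \<phi>} \<and> card {c \<in> univ M. sat M (e(0 := c)) \<phi>} \<le> k"
proof -
  define S where "S = {c \<in> univ M. sat M (e(0 := c)) \<phi>}"
  have key: "((\<forall>v\<in>set (zvs N k). g v \<in> univ M) \<and>
      sat M (\<lambda>i. if i \<in> set (zvs N k) then g i else e i) (atmost_body k N \<phi>))
     \<longleftrightarrow> ((\<forall>j\<le>k. g (N+1+j) \<in> S) \<and> inj_on (\<lambda>j. g (N+1+j)) {..k})" for g
  proof -
    define e' where "e' = (\<lambda>i. if i \<in> set (zvs N k) then g i else e i)"
    have r: "sat M e' (renf (sw (N+1+j)) \<phi>) \<longleftrightarrow> sat M (e(0 := g (N+1+j))) \<phi>" if "j \<le> k" for j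
    proof -
      have "sat M e' (renf (sw (N+1+j)) \<phi>) = sat M (e' \<circ> sw (N+1+j)) \<phi>"
        by (rule sat_renf[OF inj_sw])
      also have "\<dots> = sat M (e(0 := g (N+1+j))) \<phi>"
        apply (rule sat_cong)
        using fv that by (auto simp: e'_def zset sw_def)
      finally show ?thesis .
    qed
    have e'z: "e' (N+1+j) = g (N+1+j)" if "j \<le> k" for j
      using that by (simp add: e'_def zset)
    have "sat M e' (atmost_body k N \<phi>) \<longleftrightarrow>
        (\<forall>j\<le>k. sat M e' (renf (sw (N+1+j)) \<phi>)) \<and>
        (\<forall>i j. i \<le> k \<longrightarrow> j \<le> k \<longrightarrow> i \<noteq> j \<longrightarrow> e' (N+1+i) \<noteq> e' (N+1+j))"
    proof -
      have p: "set (filter (\<lambda>(i,j). i \<noteq> j) (List.product [0..<Suc k] [0..<Suc k])) =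
          {(i,j). i \<le> k \<and> j \<le> k \<and> i \<noteq> j}"
        by (auto simp del: upt_Suc simp: set_product)
      have u: "set [0..<Suc k] = {..k}" by auto
      show ?thesis
        unfolding atmost_body_def sat_bigconj set_append set_map p u ball_Un Ball_image_comp
        by (auto simp del: upt_Suc simp: comp_def)
    qed
    also have "\<dots> \<longleftrightarrow> (\<forall>j\<le>k. sat M (e(0 := g (N+1+j))) \<phi>) \<and>
        inj_on (\<lambda>j. g (N+1+j)) {..k}"
      using r e'z by (auto simp: inj_on_def)
    finally have A: "sat M e' (atmost_body k N \<phi>) \<longleftrightarrow> (\<forall>j\<le>k. sat M (e(0 := g (N+1+j))) \<phi>) \<and>
        inj_on (\<lambda>j. g (N+1+j)) {..k}" .
    have B: "(\<forall>v\<in>set (zvs N k). g v \<in> univ M) \<longleftrightarrow> (\<forall>j\<le>k. g (N+1+j) \<in> univ M)"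
    proof
      assume "\<forall>j\<le>k. g (N+1+j) \<in> univ M"
      note a = this
      show "\<forall>v\<in>set (zvs N k). g v \<in> univ M"
      proof
        fix v assume "v \<in> set (zvs N k)"
        then have v: "N+1 \<le> v" "v \<le> N+1+k" by (auto simp: zset)
        then have "v - (N+1) \<le> k" by simp
        then have "g (N+1+(v-(N+1))) \<in> univ M" using a by blast
        moreover have "N+1+(v-(N+1)) = v" using v by simp
        ultimately show "g v \<in> univ M" by simp
      qed
    qed (auto simp: zset)
    have C: "(\<forall>j\<le>k. g (N+1+j) \<in> S) \<longleftrightarrow> (\<forall>j\<le>k. g (N+1+j) \<in> univ M) \<and> (\<forall>j\<le>k. sat M (e(0 := g (N+1+j))) \<phi>)"
      unfolding S_def by blast
    show ?thesis unfolding e'_def[symmetric] A B C by blast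
  qed
  have "sat M e (atmost k N \<phi>) \<longleftrightarrow> \<not> (\<exists>g. (\<forall>j\<le>k. g (N+1+j) \<in> S) \<and> inj_on (\<lambda>j. g (N+1+j)) {..k})"
  proof -
    have "sat M e (atmost k N \<phi>) \<longleftrightarrow> \<not> (\<exists>g. (\<forall>v\<in>set (zvs N k). g v \<in> univ M) \<and>
      sat M (\<lambda>i. if i \<in> set (zvs N k) then g i else e i) (atmost_body k N \<phi>))"
      unfolding atmost_def sat.simps(3) sat_exs ..
    also have "\<dots> \<longleftrightarrow> \<not> (\<exists>g. (\<forall>j\<le>k. g (N+1+j) \<in> S) \<and> inj_on (\<lambda>j. g (N+1+j)) {..k})"
      apply (rule arg_cong[where f=Not])
      apply (rule ex_cong1)
      subgoal for g by (rule key[of g])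
      done
    finally show ?thesis .
  qed
  moreover have "(\<exists>g. (\<forall>j\<le>k. g (N+1+j) \<in> S) \<and> inj_on (\<lambda>j. g (N+1+j)) {..k}) \<longleftrightarrow>
       (\<exists>h. (\<forall>j\<le>k. h j \<in> S) \<and> inj_on h {..k})"
  proof
    assume "\<exists>g. (\<forall>j\<le>k. g (N+1+j) \<in> S) \<and> inj_on (\<lambda>j. g (N+1+j)) {..k}"
    then obtain g where "(\<forall>j\<le>k. g (N+1+j) \<in> S) \<and> inj_on (\<lambda>j. g (N+1+j)) {..k}" by blast
    then show "\<exists>h. (\<forall>j\<le>k. h j \<in> S) \<and> inj_on h {..k}" by (intro exI[of _ "\<lambda>j. g (N+1+j)"])
  next
    assume "\<exists>h. (\<forall>j\<le>k. h j \<in> S) \<and> inj_on h {..k}"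
    then obtain h where "(\<forall>j\<le>k. h j \<in> S) \<and> inj_on h {..k}" by blast
    then show "\<exists>g. (\<forall>j\<le>k. g (N+1+j) \<in> S) \<and> inj_on (\<lambda>j. g (N+1+j)) {..k}"
      by (intro exI[of _ "\<lambda>i. h (i - (N+1))"]) (auto simp: inj_on_def)
  qed
  ultimately have "sat M e (atmost k N \<phi>) \<longleftrightarrow> \<not> (\<exists>h. (\<forall>j\<le>k. h j \<in> S) \<and> inj_on h {..k})"
    by (simp only:)
  then show ?thesis unfolding inj_card S_def by simp
qed



lemma env_0[simp]: "env x L 0 = x"
  by (simp add: env_def)

lemma env_nth: "1 \<le> i \<Longrightarrow> i \<le> length L \<Longrightarrow> env x L i = L ! (i - 1)"
  by (cases i) (auto simp: env_def)

lemma sols_sub: "sols M \<phi> as \<subseteq> univ M"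
  by (auto simp: sols_def)

lemma step:
  fixes \<phi> \<psi> :: "('f,'p) fm"
  assumes f\<phi>: "fvars \<phi> \<subseteq> {0..length ps + 1}" and f\<psi>: "fvars \<psi> \<subseteq> {0..length ds}"
    and fin: "finite (sols M \<phi> (ps@[c]))" and c: "c \<in> sols M \<psi> ds"
    and fin\<psi>: "finite (sols M \<psi> ds)"
  shows "\<exists>\<chi>. fvars \<chi> \<subseteq> {0..length ds + length ps} \<and> finite (sols M \<chi> (ds@ps)) \<and>
           sols M \<phi> (ps@[c]) \<subseteq> sols M \<chi> (ds@ps)"
proof -
  define p where "p = length ps"
  define m where "m = length ds"
  define W where "W = m + p + 1"
  define f where "f i = (if i = 0 then 0 else if i \<le> p then i + m else if i = p + 1 then W else i + W)" for i
  define g where "g j = (if j = 0 then W else if j \<le> m then j else j + W)" for j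
  have injf: "inj f" unfolding inj_def f_def W_def by auto
  have injg: "inj g" unfolding inj_def g_def W_def by auto
  define \<phi>' where "\<phi>' = renf f \<phi>"
  define \<psi>' where "\<psi>' = renf g \<psi>"
  define k where "k = card (sols M \<phi> (ps@[c]))"
  define \<chi> where "\<chi> = FEx W (FConj \<psi>' (FConj \<phi>' (atmost k W \<phi>')))"
  have fv\<phi>': "fvars \<phi>' \<subseteq> {0..W}"
  proof -
    have "f ` {0..p+1} \<subseteq> {0..W}" unfolding f_def W_def by auto
    moreover have "f ` fvars \<phi> \<subseteq> f ` {0..p+1}" by (rule image_mono) (use f\<phi> p_def in simp)
    ultimately show ?thesis unfolding \<phi>'_def by (rule order_trans[OF fvars_renf order_trans, rotated])
  qed
  have fv\<psi>': "fvars \<psi>' \<subseteq> {0..W}"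
  proof -
    have "g ` {0..m} \<subseteq> {0..W}" unfolding g_def W_def by auto
    moreover have "g ` fvars \<psi> \<subseteq> g ` {0..m}" by (rule image_mono) (use f\<psi> m_def in simp)
    ultimately show ?thesis unfolding \<psi>'_def by (rule order_trans[OF fvars_renf order_trans, rotated])
  qed
  have fv\<chi>: "fvars \<chi> \<subseteq> {0..m + p}"
    using fv\<phi>' fv\<psi>' fvars_atmost[OF fv\<phi>', of k] unfolding \<chi>_def W_def by auto
  define E where "E x d = (env x (ds@ps))(W := d)" for x d
  have S1: "sat M (E x d) \<phi>' \<longleftrightarrow> sat M (env x (ps@[d])) \<phi>" for x d
  proof -
    have "sat M (E x d) \<phi>' = sat M (E x d \<circ> f) \<phi>" unfolding \<phi>'_def by (rule sat_renf[OF injf])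
    also have "\<dots> = sat M (env x (ps@[d])) \<phi>"
    proof (rule sat_cong, rule ballI)
      fix i assume "i \<in> fvars \<phi>"
      then have i: "i \<le> p + 1" using f\<phi> p_def by auto
      show "(E x d \<circ> f) i = env x (ps@[d]) i"
      proof (cases "i = 0")
        case True then show ?thesis by (simp add: E_def f_def W_def)
      next
        case False
        show ?thesis
        proof (cases "i \<le> p")
          case True
          then have "(E x d \<circ> f) i = env x (ds@ps) (i + m)"
            using False by (simp add: E_def f_def W_def)
          also have "\<dots> = (ds@ps) ! (i + m - 1)"
            using False True by (intro env_nth) (auto simp: m_def p_def)
          also have "\<dots> = ps ! (i - 1)" using False by (cases i) (auto simp: nth_append m_def)
          also have "\<dots> = env x (ps@[d]) i" using False True by (cases i) (auto simp: env_def nth_append p_def)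
          finally show ?thesis .
        next
          case False
          then have "i = p + 1" using i by simp
          then show ?thesis by (simp add: E_def f_def W_def env_def p_def)
        qed
      qed
    qed
    finally show ?thesis .
  qed
  have S2: "sat M (E x d) \<psi>' \<longleftrightarrow> sat M (env d ds) \<psi>" for x d
  proof -
    have "sat M (E x d) \<psi>' = sat M (E x d \<circ> g) \<psi>" unfolding \<psi>'_def by (rule sat_renf[OF injg])
    also have "\<dots> = sat M (env d ds) \<psi>"
    proof (rule sat_cong, rule ballI)
      fix j assume "j \<in> fvars \<psi>"
      then have j: "j \<le> m" using f\<psi> m_def by auto
      show "(E x d \<circ> g) j = env d ds j"
      proof (cases "j = 0")
        case True then show ?thesis by (simp add: E_def g_def)
      next
        case False
        then have "(E x d \<circ> g) j = env x (ds@ps) j"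
          using j by (simp add: E_def g_def W_def)
        also have "\<dots> = (ds@ps) ! (j - 1)"
          using j False by (intro env_nth) (auto simp: m_def)
        also have "\<dots> = ds ! (j - 1)" using False j by (cases j) (auto simp: nth_append m_def)
        also have "\<dots> = env d ds j" using False j by (cases j) (auto simp: env_def m_def)
        finally show ?thesis .
      qed
    qed
    finally show ?thesis .
  qed
  have S3: "sat M (E x d) (atmost k W \<phi>') \<longleftrightarrow>
      finite (sols M \<phi> (ps@[d])) \<and> card (sols M \<phi> (ps@[d])) \<le> k" for x d
  proof -
    have WE: "sat M ((E x d)(0 := y)) \<phi>' = sat M (E y d) \<phi>'" for y
    proof (rule sat_cong, rule ballI)
      fix i assume "i \<in> fvars \<phi>'"
      then have "i \<le> W" using fv\<phi>' by auto
      then show "((E x d)(0 := y)) i = E y d i"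
        unfolding E_def W_def by (cases i) (auto simp: env_def m_def p_def)
    qed
    have "{y \<in> univ M. sat M ((E x d)(0 := y)) \<phi>'} = sols M \<phi> (ps@[d])"
      by (simp only: WE S1 sols_def)
    then show ?thesis using sat_atmost[OF fv\<phi>', of M "E x d" k] by simp
  qed
  have solsx: "sols M \<chi> (ds@ps) = {x \<in> univ M. \<exists>d\<in>univ M. sat M (env d ds) \<psi> \<and>
      sat M (env x (ps@[d])) \<phi> \<and> finite (sols M \<phi> (ps@[d])) \<and> card (sols M \<phi> (ps@[d])) \<le> k}"
    unfolding \<chi>_def by (subst sols_def) (simp add: E_def[symmetric] S1 S2 S3)
  have "sols M \<chi> (ds@ps) \<subseteq> (\<Union>d\<in>sols M \<psi> ds. if finite (sols M \<phi> (ps@[d])) then sols M \<phi> (ps@[d]) else {})"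
    unfolding solsx by (auto simp: sols_def)
  moreover have "finite (\<Union>d\<in>sols M \<psi> ds. if finite (sols M \<phi> (ps@[d])) then sols M \<phi> (ps@[d]) else {})"
    using fin\<psi> by auto
  ultimately have "finite (sols M \<chi> (ds@ps))" by (rule finite_subset)
  moreover have "sols M \<phi> (ps@[c]) \<subseteq> sols M \<chi> (ds@ps)"
    unfolding solsx using c fin k_def by (auto simp: sols_def)
  ultimately show ?thesis using fv\<chi> m_def p_def by (intro exI[of _ \<chi>]) auto
qed


lemma aclD_iff: "x \<in> aclD M \<Delta> A \<longleftrightarrow> (\<exists>n \<phi> as. (n,\<phi>)\<in>\<Delta> \<and> set as \<subseteq> A \<and> length as = n \<and> finite (sols M \<phi> as) \<and> x \<in> sols M \<phi> as)"
  unfolding aclD_def by auto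
lemma aclDn_iff: "x \<in> aclDn M \<Delta> k A \<longleftrightarrow> (\<exists>n \<phi> as. (n,\<phi>)\<in>\<Delta> \<and> set as \<subseteq> A \<and> length as = n \<and> finite (sols M \<phi> as) \<and> card (sols M \<phi> as) \<le> k \<and> x \<in> sols M \<phi> as)"
  unfolding aclDn_def by auto


lemma acl_trans_aux:
  "\<forall>\<phi> bs. fvars \<phi> \<subseteq> {0..length (bs@cs)} \<longrightarrow> set bs \<subseteq> A \<longrightarrow> set cs \<subseteq> aclD M all_xfms A \<longrightarrow>
     finite (sols M \<phi> (bs@cs)) \<longrightarrow> sols M \<phi> (bs@cs) \<subseteq> aclD M all_xfms A"
proof (induction cs rule: rev_induct)
  case Nil
  show ?case
  proof (intro allI impI)
    fix \<phi> bs assume a: "fvars \<phi> \<subseteq> {0..length (bs@[])}" "set bs \<subseteq> A" "finite (sols M \<phi> (bs@[]))"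
    have "(length bs, \<phi>) \<in> all_xfms" using a by (simp add: all_xfms_def wf_xfm_def)
    show "sols M \<phi> (bs@[]) \<subseteq> aclD M all_xfms A"
    proof
      fix x assume "x \<in> sols M \<phi> (bs@[])"
      then show "x \<in> aclD M all_xfms A" unfolding aclD_iff
        using a \<open>(length bs, \<phi>) \<in> all_xfms\<close> by (intro exI[of _ "length bs"] exI[of _ \<phi>] exI[of _ bs]) simp
    qed
  qed
next
  case (snoc c cs)
  show ?case
  proof (intro allI impI)
    fix \<phi> bs assume a: "fvars \<phi> \<subseteq> {0..length (bs@cs@[c])}" "set bs \<subseteq> A"
      "set (cs@[c]) \<subseteq> aclD M all_xfms A" "finite (sols M \<phi> (bs@cs@[c]))"
    have "c \<in> aclD M all_xfms A" using a(3) by simp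
    then obtain n \<psi> ds where d: "(n, \<psi>) \<in> all_xfms" "set ds \<subseteq> A" "length ds = n"
      "finite (sols M \<psi> ds)" "c \<in> sols M \<psi> ds"
      unfolding aclD_iff by blast
    have f\<psi>: "fvars \<psi> \<subseteq> {0..length ds}" using d by (simp add: all_xfms_def wf_xfm_def)
    have f\<phi>: "fvars \<phi> \<subseteq> {0..length (bs@cs) + 1}" using a(1) by simp
    obtain \<chi> where \<chi>: "fvars \<chi> \<subseteq> {0..length ds + length (bs@cs)}" "finite (sols M \<chi> (ds@(bs@cs)))"
      "sols M \<phi> ((bs@cs)@[c]) \<subseteq> sols M \<chi> (ds@(bs@cs))"
      using step[OF f\<phi> f\<psi> _ d(5) d(4)] a(4) by auto
    have "sols M \<chi> ((ds@bs)@cs) \<subseteq> aclD M all_xfms A"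
      using snoc.IH[rule_format, of \<chi> "ds@bs"] \<chi> a d by auto
    then show "sols M \<phi> (bs@cs@[c]) \<subseteq> aclD M all_xfms A" using \<chi>(3) by simp
  qed
qed

definition eqf :: "('f,'p) fm" where "eqf = FEq (Var 0) (Var 1)"

lemma sols_eqf: "sols M eqf [a] = {a} \<inter> univ M"
  by (auto simp: sols_def eqf_def env_def)

lemma eqf_wf: "(1, eqf) \<in> all_xfms"
  by (auto simp: all_xfms_def wf_xfm_def eqf_def)

lemma aclD_mono: assumes "A \<subseteq> B" shows "aclD M \<Delta> A \<subseteq> aclD M \<Delta> B"
proof
  fix x assume "x \<in> aclD M \<Delta> A"
  then obtain n \<phi> as where h: "(n,\<phi>)\<in>\<Delta>" "set as \<subseteq> A" "length as = n" "finite (sols M \<phi> as)" "x \<in> sols M \<phi> as"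
    unfolding aclD_iff by blast
  then show "x \<in> aclD M \<Delta> B" unfolding aclD_iff using assms
    by (intro exI[of _ n] exI[of _ \<phi>] exI[of _ as]) auto
qed

lemma aclDn_mono: assumes "A \<subseteq> B" shows "aclDn M \<Delta> k A \<subseteq> aclDn M \<Delta> k B"
proof
  fix x assume "x \<in> aclDn M \<Delta> k A"
  then obtain n \<phi> as where h: "(n,\<phi>)\<in>\<Delta>" "set as \<subseteq> A" "length as = n" "finite (sols M \<phi> as)" "card (sols M \<phi> as) \<le> k" "x \<in> sols M \<phi> as"
    unfolding aclDn_iff by blast
  then show "x \<in> aclDn M \<Delta> k B" unfolding aclDn_iff using assms
    by (intro exI[of _ n] exI[of _ \<phi>] exI[of _ as]) auto
qed

lemma aclD_monoD: assumes "\<Delta> \<subseteq> \<Delta>'" shows "aclD M \<Delta> A \<subseteq> aclD M \<Delta>' A"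
proof
  fix x assume "x \<in> aclD M \<Delta> A"
  then obtain n \<phi> as where h: "(n,\<phi>)\<in>\<Delta>" "set as \<subseteq> A" "length as = n" "finite (sols M \<phi> as)" "x \<in> sols M \<phi> as"
    unfolding aclD_iff by blast
  then show "x \<in> aclD M \<Delta>' A" unfolding aclD_iff using assms
    by (intro exI[of _ n] exI[of _ \<phi>] exI[of _ as]) auto
qed

lemma aclDn_monoD: assumes "\<Delta> \<subseteq> \<Delta>'" shows "aclDn M \<Delta> k A \<subseteq> aclDn M \<Delta>' k A"
proof
  fix x assume "x \<in> aclDn M \<Delta> k A"
  then obtain n \<phi> as where h: "(n,\<phi>)\<in>\<Delta>" "set as \<subseteq> A" "length as = n" "finite (sols M \<phi> as)" "card (sols M \<phi> as) \<le> k" "x \<in> sols M \<phi> as"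
    unfolding aclDn_iff by blast
  then show "x \<in> aclDn M \<Delta>' k A" unfolding aclDn_iff using assms
    by (intro exI[of _ n] exI[of _ \<phi>] exI[of _ as]) auto
qed

lemma aclD_univ: "aclD M \<Delta> A \<subseteq> univ M"
proof
  fix x assume "x \<in> aclD M \<Delta> A"
  then obtain n \<phi> as where "x \<in> sols M \<phi> as" unfolding aclD_iff by blast
  then show "x \<in> univ M" by (rule subsetD[OF sols_sub])
qed

lemma aclDn_univ: "aclDn M \<Delta> k A \<subseteq> univ M"
proof
  fix x assume "x \<in> aclDn M \<Delta> k A"
  then obtain n \<phi> as where "x \<in> sols M \<phi> as" unfolding aclDn_iff by blast
  then show "x \<in> univ M" by (rule subsetD[OF sols_sub])
qed

lemma aclD_eq: "aclD M {(1, eqf)} A = A \<inter> univ M"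
proof
  show "aclD M {(1, eqf)} A \<subseteq> A \<inter> univ M"
  proof
    fix x assume "x \<in> aclD M {(1, eqf)} A"
    then obtain as where "set as \<subseteq> A" "length as = 1" "x \<in> sols M eqf as"
      unfolding aclD_iff by blast
    then obtain a where "as = [a]" "a \<in> A" "x \<in> sols M eqf [a]"
      by (cases as) auto
    then show "x \<in> A \<inter> univ M" by (auto simp: sols_eqf)
  qed
next
  show "A \<inter> univ M \<subseteq> aclD M {(1, eqf)} A"
  proof
    fix x assume x: "x \<in> A \<inter> univ M"
    then have "x \<in> sols M eqf [x]" "finite (sols M eqf [x])" by (auto simp: sols_eqf)
    then show "x \<in> aclD M {(1, eqf)} A" unfolding aclD_iff using x
      by (intro exI[of _ 1] exI[of _ eqf] exI[of _ "[x]"]) auto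
  qed
qed

lemma aclDn_eq: "k \<noteq> 0 \<Longrightarrow> aclDn M {(1, eqf)} k A = A \<inter> univ M"
proof
  show "aclDn M {(1, eqf)} k A \<subseteq> A \<inter> univ M"
  proof
    fix x assume "x \<in> aclDn M {(1, eqf)} k A"
    then obtain as where "set as \<subseteq> A" "length as = 1" "x \<in> sols M eqf as"
      unfolding aclDn_iff by blast
    then obtain a where "as = [a]" "a \<in> A" "x \<in> sols M eqf [a]"
      by (cases as) auto
    then show "x \<in> A \<inter> univ M" by (auto simp: sols_eqf)
  qed
next
  assume k: "k \<noteq> 0"
  show "A \<inter> univ M \<subseteq> aclDn M {(1, eqf)} k A"
  proof
    fix x assume x: "x \<in> A \<inter> univ M"
    then have "x \<in> sols M eqf [x]" "finite (sols M eqf [x])" "card (sols M eqf [x]) \<le> k"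
      using k by (auto simp: sols_eqf)
    then show "x \<in> aclDn M {(1, eqf)} k A" unfolding aclDn_iff using x
      by (intro exI[of _ 1] exI[of _ eqf] exI[of _ "[x]"]) auto
  qed
qed

lemma acl_regular: "regular_op M (aclD M all_xfms)"
  unfolding regular_op_def
proof (intro allI impI conjI)
  fix A assume A: "A \<subseteq> univ M"
  have "A = aclD M {(1, eqf)} A" unfolding aclD_eq using A by auto
  also have "\<dots> \<subseteq> aclD M all_xfms A" using eqf_wf by (intro aclD_monoD) auto
  finally show "A \<subseteq> aclD M all_xfms A" .
  show "aclD M all_xfms (aclD M all_xfms A) \<subseteq> aclD M all_xfms A"
  proof
    fix x assume "x \<in> aclD M all_xfms (aclD M all_xfms A)"
    then obtain n \<phi> as where d: "(n, \<phi>) \<in> all_xfms" "set as \<subseteq> aclD M all_xfms A" "length as = n"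
      "finite (sols M \<phi> as)" "x \<in> sols M \<phi> as"
      unfolding aclD_iff by blast
    have "fvars \<phi> \<subseteq> {0..length ([]@as)}" using d by (simp add: all_xfms_def wf_xfm_def)
    then have "sols M \<phi> ([]@as) \<subseteq> aclD M all_xfms A"
      by (rule acl_trans_aux[rule_format]) (use d in auto)
    then show "x \<in> aclD M all_xfms A" using subsetD d(5) by simp
  qed
qed



definition sh :: "nat \<Rightarrow> nat \<Rightarrow> nat" where
  "sh n1 i = (if i = 0 then 0 else i + n1)"

lemma inj_sh: "inj (sh n1)"
  unfolding inj_def sh_def by auto

definition comb :: "nat \<Rightarrow> nat \<Rightarrow> nat \<Rightarrow> ('f,'p) fm \<Rightarrow> ('f,'p) fm \<Rightarrow> ('f,'p) fm" where
  "comb k n1 n2 \<phi>1 \<phi>2 = FConj (FConj \<phi>1 (renf (sh n1) \<phi>2))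
      (FConj (atmost k (n1+n2) \<phi>1) (atmost k (n1+n2) (renf (sh n1) \<phi>2)))"

lemma fvars_sh:
  assumes "fvars \<phi>2 \<subseteq> {0..n2}"
  shows "fvars (renf (sh n1) \<phi>2) \<subseteq> {0..n1+n2}"
proof -
  have "sh n1 ` {0..n2} \<subseteq> {0..n1+n2}" unfolding sh_def by auto
  moreover have "sh n1 ` fvars \<phi>2 \<subseteq> sh n1 ` {0..n2}" by (rule image_mono) (rule assms)
  ultimately show ?thesis by (rule order_trans[OF fvars_renf order_trans, rotated])
qed

lemma fvars_comb:
  assumes "fvars \<phi>1 \<subseteq> {0..n1}" "fvars \<phi>2 \<subseteq> {0..n2}"
  shows "fvars (comb k n1 n2 \<phi>1 \<phi>2) \<subseteq> {0..n1+n2}"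
proof -
  have a: "fvars \<phi>1 \<subseteq> {0..n1+n2}" using assms(1) by auto
  have b: "fvars (renf (sh n1) \<phi>2) \<subseteq> {0..n1+n2}" by (rule fvars_sh[OF assms(2)])
  show ?thesis unfolding comb_def using a b fvars_atmost[OF a, of k] fvars_atmost[OF b, of k]
    by simp
qed

lemma env_app1: "i \<le> length a \<Longrightarrow> env x (a@a') i = env x a i"
  by (cases i) (auto simp: env_def nth_append)

lemma env_app2: "j \<le> length a' \<Longrightarrow> env x (a@a') (sh (length a) j) = env x a' j"
  by (cases j) (auto simp: env_def nth_append sh_def)

lemma env_upd0_agree: "i \<le> length L \<Longrightarrow> ((env x L)(0 := y)) i = env y L i"
  by (cases i) (auto simp: env_def)

lemma sat_upd0:
  assumes "fvars \<psi> \<subseteq> {0..length L}"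
  shows "sat M ((env x L)(0 := y)) \<psi> = sat M (env y L) \<psi>"
proof (rule sat_cong, rule ballI)
  fix i assume "i \<in> fvars \<psi>"
  then show "((env x L)(0 := y)) i = env y L i" using assms by (intro env_upd0_agree) auto
qed

lemma sols_comb:
  assumes f1: "fvars \<phi>1 \<subseteq> {0..length a}" and f2: "fvars \<phi>2 \<subseteq> {0..length a'}"
  shows "sols M (comb k (length a) (length a') \<phi>1 \<phi>2) (a@a') =
    (if finite (sols M \<phi>1 a) \<and> card (sols M \<phi>1 a) \<le> k \<and> finite (sols M \<phi>2 a') \<and> card (sols M \<phi>2 a') \<le> k
     then sols M \<phi>1 a \<inter> sols M \<phi>2 a' else {})"
proof -
  define n1 where "n1 = length a"
  define n2 where "n2 = length a'"
  define \<phi>2' where "\<phi>2' = renf (sh n1) \<phi>2"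
  have f1': "fvars \<phi>1 \<subseteq> {0..n1+n2}" using f1 n1_def by auto
  have f2': "fvars \<phi>2' \<subseteq> {0..n1+n2}" unfolding \<phi>2'_def by (rule fvars_sh) (use f2 n2_def in simp)
  have C1: "sat M (env x (a@a')) \<phi>1 \<longleftrightarrow> sat M (env x a) \<phi>1" for x
  proof (rule sat_cong, rule ballI)
    fix i assume "i \<in> fvars \<phi>1"
    then show "env x (a@a') i = env x a i" using f1 by (intro env_app1) auto
  qed
  have C2: "sat M (env x (a@a')) \<phi>2' \<longleftrightarrow> sat M (env x a') \<phi>2" for x
  proof -
    have "sat M (env x (a@a')) \<phi>2' = sat M (env x (a@a') \<circ> sh n1) \<phi>2"
      unfolding \<phi>2'_def by (rule sat_renf[OF inj_sh])
    also have "\<dots> = sat M (env x a') \<phi>2"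
    proof (rule sat_cong, rule ballI)
      fix j assume "j \<in> fvars \<phi>2"
      then have "j \<le> length a'" using f2 by auto
      then show "(env x (a@a') \<circ> sh n1) j = env x a' j" unfolding n1_def
        by (simp add: env_app2)
    qed
    finally show ?thesis .
  qed
  have L: "length (a@a') = n1 + n2" using n1_def n2_def by simp
  have A1: "sat M (env x (a@a')) (atmost k (n1+n2) \<phi>1) \<longleftrightarrow>
      finite (sols M \<phi>1 a) \<and> card (sols M \<phi>1 a) \<le> k" for x
  proof -
    have "{y \<in> univ M. sat M ((env x (a@a'))(0 := y)) \<phi>1} = sols M \<phi>1 a"
      unfolding sols_def using sat_upd0[of \<phi>1 "a@a'" M x] f1' L C1 by simp
    then show ?thesis using sat_atmost[OF f1', of M "env x (a@a')" k] by simp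
  qed
  have A2: "sat M (env x (a@a')) (atmost k (n1+n2) \<phi>2') \<longleftrightarrow>
      finite (sols M \<phi>2 a') \<and> card (sols M \<phi>2 a') \<le> k" for x
  proof -
    have "{y \<in> univ M. sat M ((env x (a@a'))(0 := y)) \<phi>2'} = sols M \<phi>2 a'"
      unfolding sols_def using sat_upd0[of \<phi>2' "a@a'" M x] f2' L C2 by simp
    then show ?thesis using sat_atmost[OF f2', of M "env x (a@a')" k] by simp
  qed
  show ?thesis
    unfolding n1_def[symmetric] n2_def[symmetric] comb_def \<phi>2'_def[symmetric]
    apply (subst sols_def)
    using A1 A2 C1 C2 by (auto simp: sols_def)
qed

definition meetD :: "(nat \<times> ('f,'p) fm) set \<Rightarrow> (nat \<times> ('f,'p) fm) set \<Rightarrow> nat set \<Rightarrow> (nat \<times> ('f,'p) fm) set" where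
  "meetD \<Delta>1 \<Delta>2 K = {(n1+n2, comb k n1 n2 \<phi>1 \<phi>2) | n1 \<phi>1 n2 \<phi>2 k. (n1,\<phi>1)\<in>\<Delta>1 \<and> (n2,\<phi>2)\<in>\<Delta>2 \<and> k\<in>K}"

lemma meetD_wf:
  assumes "\<Delta>1 \<subseteq> all_xfms" "\<Delta>2 \<subseteq> all_xfms"
  shows "meetD \<Delta>1 \<Delta>2 K \<subseteq> all_xfms"
proof
  fix p assume "p \<in> meetD \<Delta>1 \<Delta>2 K"
  then obtain n1 \<phi>1 n2 \<phi>2 k where p: "p = (n1+n2, comb k n1 n2 \<phi>1 \<phi>2)" "(n1,\<phi>1)\<in>\<Delta>1" "(n2,\<phi>2)\<in>\<Delta>2"
    unfolding meetD_def by blast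
  have "(n1,\<phi>1) \<in> all_xfms" "(n2,\<phi>2) \<in> all_xfms" using p assms by auto
  then have "fvars \<phi>1 \<subseteq> {0..n1}" "fvars \<phi>2 \<subseteq> {0..n2}"
    by (simp_all add: all_xfms_def wf_xfm_def)
  then have "fvars (comb k n1 n2 \<phi>1 \<phi>2) \<subseteq> {0..n1+n2}" by (rule fvars_comb)
  then show "p \<in> all_xfms" using p(1) by (simp add: all_xfms_def wf_xfm_def)
qed



lemma wfD: "(n, \<phi>) \<in> \<Delta> \<Longrightarrow> \<Delta> \<subseteq> all_xfms \<Longrightarrow> fvars \<phi> \<subseteq> {0..n}"
proof -
  assume a: "(n, \<phi>) \<in> \<Delta>" "\<Delta> \<subseteq> all_xfms"
  have "(n, \<phi>) \<in> all_xfms" using a(2) a(1) by (rule subsetD)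
  then show ?thesis by (simp add: all_xfms_def wf_xfm_def)
qed

lemma meet_split:
  assumes "(n, \<chi>) \<in> meetD \<Delta>1 \<Delta>2 K" "length cs = n" "set cs \<subseteq> A"
    "\<Delta>1 \<subseteq> all_xfms" "\<Delta>2 \<subseteq> all_xfms"
  obtains n1 \<phi>1 n2 \<phi>2 k a a' where "(n1,\<phi>1)\<in>\<Delta>1" "(n2,\<phi>2)\<in>\<Delta>2" "k \<in> K"
    "length a = n1" "length a' = n2" "set a \<subseteq> A" "set a' \<subseteq> A"
    "sols M \<chi> cs = (if finite (sols M \<phi>1 a) \<and> card (sols M \<phi>1 a) \<le> k \<and> finite (sols M \<phi>2 a') \<and> card (sols M \<phi>2 a') \<le> k
     then sols M \<phi>1 a \<inter> sols M \<phi>2 a' else {})"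
proof -
  obtain n1 \<phi>1 n2 \<phi>2 k where p: "n = n1+n2" "\<chi> = comb k n1 n2 \<phi>1 \<phi>2" "(n1,\<phi>1)\<in>\<Delta>1" "(n2,\<phi>2)\<in>\<Delta>2" "k\<in>K"
    using assms(1) unfolding meetD_def by blast
  define a where "a = take n1 cs"
  define a' where "a' = drop n1 cs"
  have cs: "cs = a @ a'" unfolding a_def a'_def by simp
  have la: "length a = n1" "length a' = n2" unfolding a_def a'_def using assms(2) p(1) by auto
  have sa: "set a \<subseteq> A" "set a' \<subseteq> A" unfolding a_def a'_def using assms(3)
    by (meson order_trans set_take_subset set_drop_subset)+
  have f1: "fvars \<phi>1 \<subseteq> {0..length a}" using wfD[OF p(3) assms(4)] la by simp
  have f2: "fvars \<phi>2 \<subseteq> {0..length a'}" using wfD[OF p(4) assms(5)] la by simp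
  have "sols M \<chi> cs = sols M (comb k (length a) (length a') \<phi>1 \<phi>2) (a@a')"
    using p(2) cs la by simp
  also have "\<dots> = (if finite (sols M \<phi>1 a) \<and> card (sols M \<phi>1 a) \<le> k \<and> finite (sols M \<phi>2 a') \<and> card (sols M \<phi>2 a') \<le> k
     then sols M \<phi>1 a \<inter> sols M \<phi>2 a' else {})" by (rule sols_comb[OF f1 f2])
  finally show ?thesis using that p la sa by blast
qed

lemma aclD_meet:
  assumes D: "\<Delta>1 \<subseteq> all_xfms" "\<Delta>2 \<subseteq> all_xfms"
  shows "aclD M (meetD \<Delta>1 \<Delta>2 UNIV) A = aclD M \<Delta>1 A \<inter> aclD M \<Delta>2 A"
proof
  show "aclD M (meetD \<Delta>1 \<Delta>2 UNIV) A \<subseteq> aclD M \<Delta>1 A \<inter> aclD M \<Delta>2 A"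
  proof
    fix x assume "x \<in> aclD M (meetD \<Delta>1 \<Delta>2 UNIV) A"
    then obtain n \<chi> cs where h: "(n,\<chi>)\<in>meetD \<Delta>1 \<Delta>2 UNIV" "set cs \<subseteq> A" "length cs = n"
      "x \<in> sols M \<chi> cs" unfolding aclD_iff by blast
    obtain n1 \<phi>1 n2 \<phi>2 k a a' where m: "(n1,\<phi>1)\<in>\<Delta>1" "(n2,\<phi>2)\<in>\<Delta>2"
      "length a = n1" "length a' = n2" "set a \<subseteq> A" "set a' \<subseteq> A"
      "sols M \<chi> cs = (if finite (sols M \<phi>1 a) \<and> card (sols M \<phi>1 a) \<le> k \<and> finite (sols M \<phi>2 a') \<and> card (sols M \<phi>2 a') \<le> k
       then sols M \<phi>1 a \<inter> sols M \<phi>2 a' else {})"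
      by (rule meet_split[OF h(1) h(3) h(2) D])
    have c: "finite (sols M \<phi>1 a)" "finite (sols M \<phi>2 a')" "x \<in> sols M \<phi>1 a" "x \<in> sols M \<phi>2 a'"
      using h(4) m(7) by (auto split: if_splits)
    have "x \<in> aclD M \<Delta>1 A" unfolding aclD_iff
      using m c by (intro exI[of _ n1] exI[of _ \<phi>1] exI[of _ a]) simp
    moreover have "x \<in> aclD M \<Delta>2 A" unfolding aclD_iff
      using m c by (intro exI[of _ n2] exI[of _ \<phi>2] exI[of _ a']) simp
    ultimately show "x \<in> aclD M \<Delta>1 A \<inter> aclD M \<Delta>2 A" by simp
  qed
next
  show "aclD M \<Delta>1 A \<inter> aclD M \<Delta>2 A \<subseteq> aclD M (meetD \<Delta>1 \<Delta>2 UNIV) A"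
  proof
    fix x assume "x \<in> aclD M \<Delta>1 A \<inter> aclD M \<Delta>2 A"
    then have x1: "x \<in> aclD M \<Delta>1 A" and x2: "x \<in> aclD M \<Delta>2 A" by auto
    obtain n1 \<phi>1 a where h1: "(n1,\<phi>1)\<in>\<Delta>1" "set a \<subseteq> A" "length a = n1" "finite (sols M \<phi>1 a)" "x \<in> sols M \<phi>1 a"
      using x1 unfolding aclD_iff by blast
    obtain n2 \<phi>2 a' where h2: "(n2,\<phi>2)\<in>\<Delta>2" "set a' \<subseteq> A" "length a' = n2" "finite (sols M \<phi>2 a')" "x \<in> sols M \<phi>2 a'"
      using x2 unfolding aclD_iff by blast
    define k where "k = max (card (sols M \<phi>1 a)) (card (sols M \<phi>2 a'))"
    have f1: "fvars \<phi>1 \<subseteq> {0..length a}" using wfD[OF h1(1) D(1)] h1 by simp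
    have f2: "fvars \<phi>2 \<subseteq> {0..length a'}" using wfD[OF h2(1) D(2)] h2 by simp
    have s: "sols M (comb k (length a) (length a') \<phi>1 \<phi>2) (a@a') = sols M \<phi>1 a \<inter> sols M \<phi>2 a'"
      unfolding sols_comb[OF f1 f2] using h1 h2 k_def by simp
    have mem: "(length (a@a'), comb k (length a) (length a') \<phi>1 \<phi>2) \<in> meetD \<Delta>1 \<Delta>2 UNIV"
      unfolding meetD_def mem_Collect_eq using h1 h2
      by (intro exI[of _ "length a"] exI[of _ \<phi>1] exI[of _ "length a'"] exI[of _ \<phi>2] exI[of _ k]) simp
    show "x \<in> aclD M (meetD \<Delta>1 \<Delta>2 UNIV) A" unfolding aclD_iff
      apply (intro exI[of _ "length (a@a')"] exI[of _ "comb k (length a) (length a') \<phi>1 \<phi>2"] exI[of _ "a@a'"])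
      using mem s h1 h2 by simp
  qed
qed

lemma aclDn_meet:
  assumes D: "\<Delta>1 \<subseteq> all_xfms" "\<Delta>2 \<subseteq> all_xfms"
  shows "aclDn M (meetD \<Delta>1 \<Delta>2 {k}) k A = aclDn M \<Delta>1 k A \<inter> aclDn M \<Delta>2 k A"
proof
  show "aclDn M (meetD \<Delta>1 \<Delta>2 {k}) k A \<subseteq> aclDn M \<Delta>1 k A \<inter> aclDn M \<Delta>2 k A"
  proof
    fix x assume "x \<in> aclDn M (meetD \<Delta>1 \<Delta>2 {k}) k A"
    then obtain n \<chi> cs where h: "(n,\<chi>)\<in>meetD \<Delta>1 \<Delta>2 {k}" "set cs \<subseteq> A" "length cs = n"
      "x \<in> sols M \<chi> cs" unfolding aclDn_iff by blast
    obtain n1 \<phi>1 n2 \<phi>2 k' a a' where m: "(n1,\<phi>1)\<in>\<Delta>1" "(n2,\<phi>2)\<in>\<Delta>2" "k' \<in> {k}"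
      "length a = n1" "length a' = n2" "set a \<subseteq> A" "set a' \<subseteq> A"
      "sols M \<chi> cs = (if finite (sols M \<phi>1 a) \<and> card (sols M \<phi>1 a) \<le> k' \<and> finite (sols M \<phi>2 a') \<and> card (sols M \<phi>2 a') \<le> k'
       then sols M \<phi>1 a \<inter> sols M \<phi>2 a' else {})"
      by (rule meet_split[OF h(1) h(3) h(2) D])
    have c: "finite (sols M \<phi>1 a)" "finite (sols M \<phi>2 a')" "x \<in> sols M \<phi>1 a" "x \<in> sols M \<phi>2 a'"
      "card (sols M \<phi>1 a) \<le> k" "card (sols M \<phi>2 a') \<le> k"
      using h(4) m(8) m(3) by (auto split: if_splits)
    have "x \<in> aclDn M \<Delta>1 k A" unfolding aclDn_iff
      using m c by (intro exI[of _ n1] exI[of _ \<phi>1] exI[of _ a]) simp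
    moreover have "x \<in> aclDn M \<Delta>2 k A" unfolding aclDn_iff
      using m c by (intro exI[of _ n2] exI[of _ \<phi>2] exI[of _ a']) simp
    ultimately show "x \<in> aclDn M \<Delta>1 k A \<inter> aclDn M \<Delta>2 k A" by simp
  qed
next
  show "aclDn M \<Delta>1 k A \<inter> aclDn M \<Delta>2 k A \<subseteq> aclDn M (meetD \<Delta>1 \<Delta>2 {k}) k A"
  proof
    fix x assume "x \<in> aclDn M \<Delta>1 k A \<inter> aclDn M \<Delta>2 k A"
    then have x1: "x \<in> aclDn M \<Delta>1 k A" and x2: "x \<in> aclDn M \<Delta>2 k A" by auto
    obtain n1 \<phi>1 a where h1: "(n1,\<phi>1)\<in>\<Delta>1" "set a \<subseteq> A" "length a = n1" "finite (sols M \<phi>1 a)"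
        "card (sols M \<phi>1 a) \<le> k" "x \<in> sols M \<phi>1 a"
      using x1 unfolding aclDn_iff by blast
    obtain n2 \<phi>2 a' where h2: "(n2,\<phi>2)\<in>\<Delta>2" "set a' \<subseteq> A" "length a' = n2" "finite (sols M \<phi>2 a')"
        "card (sols M \<phi>2 a') \<le> k" "x \<in> sols M \<phi>2 a'"
      using x2 unfolding aclDn_iff by blast
    have f1: "fvars \<phi>1 \<subseteq> {0..length a}" using wfD[OF h1(1) D(1)] h1 by simp
    have f2: "fvars \<phi>2 \<subseteq> {0..length a'}" using wfD[OF h2(1) D(2)] h2 by simp
    have s: "sols M (comb k (length a) (length a') \<phi>1 \<phi>2) (a@a') = sols M \<phi>1 a \<inter> sols M \<phi>2 a'"
      unfolding sols_comb[OF f1 f2] using h1 h2 by simp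
    have cd: "card (sols M \<phi>1 a \<inter> sols M \<phi>2 a') \<le> k"
      using card_mono[OF h1(4), of "sols M \<phi>1 a \<inter> sols M \<phi>2 a'"] h1(5) by auto
    have mem: "(length (a@a'), comb k (length a) (length a') \<phi>1 \<phi>2) \<in> meetD \<Delta>1 \<Delta>2 {k}"
      unfolding meetD_def mem_Collect_eq using h1 h2
      by (intro exI[of _ "length a"] exI[of _ \<phi>1] exI[of _ "length a'"] exI[of _ \<phi>2] exI[of _ k]) simp
    show "x \<in> aclDn M (meetD \<Delta>1 \<Delta>2 {k}) k A" unfolding aclDn_iff
      apply (intro exI[of _ "length (a@a')"] exI[of _ "comb k (length a) (length a') \<phi>1 \<phi>2"] exI[of _ "a@a'"])
      using mem s h1 h2 cd by simp
  qed
qed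

lemma regular_inter:
  assumes r1: "regular_op M c1" and r2: "regular_op M c2"
    and m1: "\<And>A B. A \<subseteq> B \<Longrightarrow> c1 A \<subseteq> c1 B" and m2: "\<And>A B. A \<subseteq> B \<Longrightarrow> c2 A \<subseteq> c2 B"
    and u1: "\<And>A. c1 A \<subseteq> univ M" and u2: "\<And>A. c2 A \<subseteq> univ M"
  shows "regular_op M (\<lambda>A. c1 A \<inter> c2 A)"
  unfolding regular_op_def
proof (intro allI impI conjI)
  fix A :: "'a set" assume A: "A \<subseteq> univ M"
  have R1: "B \<subseteq> c1 B" "c1 (c1 B) \<subseteq> c1 B" if "B \<subseteq> univ M" for B
    using r1 that unfolding regular_op_def by auto
  have R2: "B \<subseteq> c2 B" "c2 (c2 B) \<subseteq> c2 B" if "B \<subseteq> univ M" for B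
    using r2 that unfolding regular_op_def by auto
  show "A \<subseteq> c1 A \<inter> c2 A" using R1(1)[OF A] R2(1)[OF A] by simp
  have "c1 (c1 A \<inter> c2 A) \<subseteq> c1 (c1 A)" by (rule m1) (rule Int_lower1)
  also have "\<dots> \<subseteq> c1 A" by (rule R1(2)[OF A])
  finally have a: "c1 (c1 A \<inter> c2 A) \<subseteq> c1 A" .
  have "c2 (c1 A \<inter> c2 A) \<subseteq> c2 (c2 A)" by (rule m2) (rule Int_lower2)
  also have "\<dots> \<subseteq> c2 A" by (rule R2(2)[OF A])
  finally have b: "c2 (c1 A \<inter> c2 A) \<subseteq> c2 A" .
  show "c1 (c1 A \<inter> c2 A) \<inter> c2 (c1 A \<inter> c2 A) \<subseteq> c1 A \<inter> c2 A" using a b by (rule Int_mono)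
qed



lemma SL_acl_E:
  assumes "c \<in> SL_acl M"
  obtains \<Delta> where "\<Delta> \<subseteq> all_xfms" "c = aclD M \<Delta>" "regular_op M c"
  using assms unfolding SL_acl_def by blast

lemma SL_acl_n_E:
  assumes "c \<in> SL_acl_n M k"
  obtains \<Delta> where "\<Delta> \<subseteq> all_xfms" "c = aclDn M \<Delta> k" "regular_op M c"
  using assms unfolding SL_acl_n_def by blast

lemma regular_sub: "regular_op M c \<Longrightarrow> A \<subseteq> univ M \<Longrightarrow> A \<subseteq> c A"
  unfolding regular_op_def by auto

lemma part1_meet: "meet_semilattice_by_inter M (SL_acl M)"
  unfolding meet_semilattice_by_inter_def
proof (intro ballI conjI)
  fix c1 c2 assume c1: "c1 \<in> SL_acl M" and c2: "c2 \<in> SL_acl M"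
  obtain \<Delta>1 where D1: "\<Delta>1 \<subseteq> all_xfms" "c1 = aclD M \<Delta>1" "regular_op M c1" using c1 by (rule SL_acl_E)
  obtain \<Delta>2 where D2: "\<Delta>2 \<subseteq> all_xfms" "c2 = aclD M \<Delta>2" "regular_op M c2" using c2 by (rule SL_acl_E)
  have eq: "(\<lambda>A. c1 A \<inter> c2 A) = aclD M (meetD \<Delta>1 \<Delta>2 UNIV)"
    unfolding D1(2) D2(2) fun_eq_iff by (simp add: aclD_meet[OF D1(1) D2(1)])
  have reg: "regular_op M (\<lambda>A. c1 A \<inter> c2 A)"
    by (rule regular_inter[OF D1(3) D2(3)]) (simp_all add: D1(2) D2(2) aclD_mono aclD_univ)
  have w: "meetD \<Delta>1 \<Delta>2 UNIV \<subseteq> all_xfms" by (rule meetD_wf[OF D1(1) D2(1)])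
  show "(\<lambda>A. c1 A \<inter> c2 A) \<in> SL_acl M"
    unfolding SL_acl_def mem_Collect_eq using eq reg w by (intro exI[of _ "meetD \<Delta>1 \<Delta>2 UNIV"]) simp
  show "op_le M (\<lambda>A. c1 A \<inter> c2 A) c1" unfolding op_le_def by auto
  show "op_le M (\<lambda>A. c1 A \<inter> c2 A) c2" unfolding op_le_def by auto
  fix c assume "c \<in> SL_acl M"
  show "op_le M c c1 \<and> op_le M c c2 \<longrightarrow> op_le M c (\<lambda>A. c1 A \<inter> c2 A)"
    unfolding op_le_def by auto
qed

lemma part2_meet: "meet_semilattice_by_inter M (SL_acl_n M k)"
  unfolding meet_semilattice_by_inter_def
proof (intro ballI conjI)
  fix c1 c2 assume c1: "c1 \<in> SL_acl_n M k" and c2: "c2 \<in> SL_acl_n M k"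
  obtain \<Delta>1 where D1: "\<Delta>1 \<subseteq> all_xfms" "c1 = aclDn M \<Delta>1 k" "regular_op M c1" using c1 by (rule SL_acl_n_E)
  obtain \<Delta>2 where D2: "\<Delta>2 \<subseteq> all_xfms" "c2 = aclDn M \<Delta>2 k" "regular_op M c2" using c2 by (rule SL_acl_n_E)
  have eq: "(\<lambda>A. c1 A \<inter> c2 A) = aclDn M (meetD \<Delta>1 \<Delta>2 {k}) k"
    unfolding D1(2) D2(2) fun_eq_iff by (simp add: aclDn_meet[OF D1(1) D2(1)])
  have reg: "regular_op M (\<lambda>A. c1 A \<inter> c2 A)"
    by (rule regular_inter[OF D1(3) D2(3)]) (simp_all add: D1(2) D2(2) aclDn_mono aclDn_univ)
  have w: "meetD \<Delta>1 \<Delta>2 {k} \<subseteq> all_xfms" by (rule meetD_wf[OF D1(1) D2(1)])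
  show "(\<lambda>A. c1 A \<inter> c2 A) \<in> SL_acl_n M k"
    unfolding SL_acl_n_def mem_Collect_eq using eq reg w by (intro exI[of _ "meetD \<Delta>1 \<Delta>2 {k}"]) simp
  show "op_le M (\<lambda>A. c1 A \<inter> c2 A) c1" unfolding op_le_def by auto
  show "op_le M (\<lambda>A. c1 A \<inter> c2 A) c2" unfolding op_le_def by auto
  fix c assume "c \<in> SL_acl_n M k"
  show "op_le M c c1 \<and> op_le M c c2 \<longrightarrow> op_le M c (\<lambda>A. c1 A \<inter> c2 A)"
    unfolding op_le_def by auto
qed

lemma reg_int_univ: "regular_op M (\<lambda>A. A \<inter> univ M)"
  unfolding regular_op_def by auto

lemma part1_least: "has_least M (SL_acl M)"
  unfolding has_least_def
proof (rule bexI[of _ "aclD M {(1, eqf)}"])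
  have e: "aclD M {(1, eqf)} = (\<lambda>A. A \<inter> univ M)" by (rule ext) (rule aclD_eq)
  show "aclD M {(1, eqf)} \<in> SL_acl M"
    unfolding SL_acl_def mem_Collect_eq using eqf_wf e reg_int_univ[of M]
    by (intro exI[of _ "{(1, eqf)}"]) simp
  show "\<forall>d\<in>SL_acl M. op_le M (aclD M {(1, eqf)}) d"
  proof
    fix d assume "d \<in> SL_acl M"
    then obtain \<Delta> where "regular_op M d" by (rule SL_acl_E)
    then show "op_le M (aclD M {(1, eqf)}) d" unfolding op_le_def e
      using regular_sub[of M d] by blast
  qed
qed

lemma part2_least: "k \<noteq> 0 \<Longrightarrow> has_least M (SL_acl_n M k)"
  unfolding has_least_def
proof (rule bexI[of _ "aclDn M {(1, eqf)} k"])
  assume k: "k \<noteq> 0"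
  have e: "aclDn M {(1, eqf)} k = (\<lambda>A. A \<inter> univ M)" by (rule ext) (rule aclDn_eq[OF k])
  show "aclDn M {(1, eqf)} k \<in> SL_acl_n M k"
    unfolding SL_acl_n_def mem_Collect_eq using eqf_wf e reg_int_univ[of M]
    by (intro exI[of _ "{(1, eqf)}"]) simp
  show "\<forall>d\<in>SL_acl_n M k. op_le M (aclDn M {(1, eqf)} k) d"
  proof
    fix d assume "d \<in> SL_acl_n M k"
    then obtain \<Delta> where "regular_op M d" by (rule SL_acl_n_E)
    then show "op_le M (aclDn M {(1, eqf)} k) d" unfolding op_le_def e
      using regular_sub[of M d] by blast
  qed
qed

lemma part1_greatest: "has_greatest M (SL_acl M)"
  unfolding has_greatest_def
proof (rule bexI[of _ "aclD M all_xfms"])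
  show "aclD M all_xfms \<in> SL_acl M"
    unfolding SL_acl_def mem_Collect_eq using acl_regular
    by (intro exI[of _ all_xfms]) simp
  show "\<forall>d\<in>SL_acl M. op_le M d (aclD M all_xfms)"
  proof
    fix d assume "d \<in> SL_acl M"
    then obtain \<Delta> where "\<Delta> \<subseteq> all_xfms" "d = aclD M \<Delta>" by (rule SL_acl_E)
    then show "op_le M d (aclD M all_xfms)" unfolding op_le_def
      using aclD_monoD[of \<Delta> all_xfms M] by blast
  qed
qed

lemma part2_greatest: "regular_op M (acl_n M k) \<Longrightarrow> has_greatest M (SL_acl_n M k)"
  unfolding has_greatest_def
proof (rule bexI[of _ "aclDn M all_xfms k"])
  assume r: "regular_op M (acl_n M k)"
  show "aclDn M all_xfms k \<in> SL_acl_n M k"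
    unfolding SL_acl_n_def mem_Collect_eq using r unfolding acl_n_def
    by (intro exI[of _ all_xfms]) simp
  show "\<forall>d\<in>SL_acl_n M k. op_le M d (aclDn M all_xfms k)"
  proof
    fix d assume "d \<in> SL_acl_n M k"
    then obtain \<Delta> where "\<Delta> \<subseteq> all_xfms" "d = aclDn M \<Delta> k" by (rule SL_acl_n_E)
    then show "op_le M d (aclDn M all_xfms k)" unfolding op_le_def
      using aclDn_monoD[of \<Delta> all_xfms M k] by blast
  qed
qed

theorem mainTheorem7:
  fixes T :: "('f,'p) fm set" and M :: "('a,'f,'p) struc"
  assumes "complete_theory T TYPE('a)"
    and "is_model M T"
    and "saturated_model M T"
  shows "(meet_semilattice_by_inter M (SL_acl M) \<and> has_least M (SL_acl M)
           \<and> has_greatest M (SL_acl M))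
         \<and> (\<forall>n::nat. n \<noteq> 0 \<longrightarrow>
             meet_semilattice_by_inter M (SL_acl_n M n) \<and> has_least M (SL_acl_n M n)
             \<and> (regular_op M (acl_n M n) \<longrightarrow> has_greatest M (SL_acl_n M n)))"
  using part1_meet[of M] part1_least[of M] part1_greatest[of M] part2_meet[of M] part2_least[of _ M]
    part2_greatest[of M] by blast

end
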